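(* Let $\mu\in\mathbb{R}^J$, $T\in\mathbb{R}$, and let $\Lambda\in\mathbb{R}^{J\times J}$ be symmetric positive definite. Consider the constraint \[ \mu^{\top}y+\sqrt{y^{\top}\Lambda y}\le T,\qquad y\in\{0,1\}^J. \tag{C} \] Let $\Delta^{L}$ be an optimal solution of the semidefinite program \[ \min_{\Delta}\ \|\Delta-\Lambda\|_2\ \ \text{s.t.}\ \ 0\preceq\Delta\preceq\Lambda,\ \ 2\sum_{s=1}^J\Delta_{rs}\ge\Delta_{rr}\ \forall r\in[J],\ \ \Delta_{rs}\le 0\ \forall r,s\in[J],\ r\ne s, \] and let $\Delta^{U}$ be an optimal solution of the semidefinite program \[ \min_{\Delta}\ \|\Delta-\Lambda\|_2\ \ \text{s.t.}\ \ \Delta\succeq\Lambda,\ \ 2\sum_{s=1}^J\Delta_{rs}\ge\Delta_{rr}\ \forall r\in[J],\ \ \Delta_{rs}\le 0\ \forall r,s\in[J],\ r\ne s, \] where in both programs $\Delta$ ranges over symmetric $J\times J$ matrices. Then: (a) the function $g^{L}(y)=\mu^{\top}y+\sqrt{y^{\top}\Delta^{L}y}$ is submodular on $\{0,1\}^J$, and every $y$ satisfying (C) satisfies $\mu^{\top}y+\sqrt{y^{\top}\Delta^{L}y}\le T$; (b) the function $g^{U}(y)=\mu^{\top}y+\sqrt{y^{\top}\Delta^{U}y}$ is submodular on $\{0,1\}^J$, and every $y\in\{0,1\}^J$ satisfying $\mu^{\top}y+\sqrt{y^{\top}\Delta^{U}y}\le T$ satisfies (C).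
   Context: $[J]=\{1,\dots,J\}$; $A\preceq B$ means $B-A$ is positive semidefinite; $\|\cdot\|_2$ is the matrix $\ell^2$ norm. A vector $y\in\{0,1\}^J$ is identified with the subset $\{j:y_j=1\}$. A set function $h$ on subsets of $[J]$ is submodular if $h(R\cup\{j\})-h(R)\ge h(S\cup\{j\})-h(S)$ for all $R\subseteq S\subseteq[J]$ and $j\in[J]\setminus S$. *)

theory Defs
  imports "HOL-Analysis.Analysis"
begin

text \<open>J x J real matrices are indexed by a finite type 'n, with J = CARD('n).\<close>

definition symmetric_mat :: "real^'n^'n \<Rightarrow> bool" where
  "symmetric_mat A \<longleftrightarrow> transpose A = A"

definition psd :: "real^'n^'n \<Rightarrow> bool" where
  "psd A \<longleftrightarrow> (\<forall>x. 0 \<le> x \<bullet> (A *v x))"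

definition pos_def :: "real^'n^'n \<Rightarrow> bool" where
  "pos_def A \<longleftrightarrow> (\<forall>x. x \<noteq> 0 \<longrightarrow> 0 < x \<bullet> (A *v x))"

definition loewner_le :: "real^'n^'n \<Rightarrow> real^'n^'n \<Rightarrow> bool" where
  "loewner_le A B \<longleftrightarrow> psd (B - A)"

definition mat_l2_norm :: "real^'n^'n \<Rightarrow> real" where
  "mat_l2_norm A = onorm (\<lambda>x. A *v x)"

definition indvec :: "'n set \<Rightarrow> real^'n" where
  "indvec S = (\<chi> i. if i \<in> S then 1 else 0)"

definition submodular :: "('n set \<Rightarrow> real) \<Rightarrow> bool" where
  "submodular h \<longleftrightarrow>
     (\<forall>R S j. R \<subseteq> S \<and> j \<notin> S \<longrightarrow>
        h (R \<union> {j}) - h R \<ge> h (S \<union> {j}) - h S)"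

definition gfun :: "real^'n \<Rightarrow> real^'n^'n \<Rightarrow> real^'n \<Rightarrow> real" where
  "gfun \<mu> D y = \<mu> \<bullet> y + sqrt (y \<bullet> (D *v y))"

definition sdp_common :: "real^'n^'n \<Rightarrow> bool" where
  "sdp_common D \<longleftrightarrow> symmetric_mat D
     \<and> (\<forall>r. 2 * (\<Sum>s\<in>UNIV. D $ r $ s) \<ge> D $ r $ r)
     \<and> (\<forall>r s. r \<noteq> s \<longrightarrow> D $ r $ s \<le> 0)"

definition feasible_L :: "real^'n^'n \<Rightarrow> real^'n^'n \<Rightarrow> bool" where
  "feasible_L \<Lambda> D \<longleftrightarrow> sdp_common D \<and> loewner_le 0 D \<and> loewner_le D \<Lambda>"

definition feasible_U :: "real^'n^'n \<Rightarrow> real^'n^'n \<Rightarrow> bool" where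
  "feasible_U \<Lambda> D \<longleftrightarrow> sdp_common D \<and> loewner_le \<Lambda> D"

definition optimal_for :: "(real^'n^'n \<Rightarrow> bool) \<Rightarrow> real^'n^'n \<Rightarrow> real^'n^'n \<Rightarrow> bool" where
  "optimal_for feas \<Lambda> D \<longleftrightarrow> feas D \<and>
     (\<forall>D'. feas D' \<longrightarrow> mat_l2_norm (D - \<Lambda>) \<le> mat_l2_norm (D' - \<Lambda>))"

end

theory Submission
  imports Defs
begin

lemma inner_indvec: "\<mu> \<bullet> indvec S = (\<Sum>i\<in>S. \<mu> $ i)"
  unfolding inner_vec_def indvec_def
  by (simp add: if_distrib sum.If_cases cong: if_cong)

lemma ind_mult1: "(if P then 1 else 0) * (x::real) = (if P then x else 0)" by simp
lemma ind_mult2: "(x::real) * (if P then 1 else 0) = (if P then x else 0)" by simp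

lemma quad_indvec: "indvec S \<bullet> (D *v indvec S) = (\<Sum>r\<in>S. \<Sum>s\<in>S. D $ r $ s)"
  unfolding inner_vec_def indvec_def matrix_vector_mult_def
  by (simp add: ind_mult1 ind_mult2 sum.If_cases del: mult_1 mult_1_right)

definition QQ :: "real^'n^'n \<Rightarrow> 'n::finite set \<Rightarrow> real" where
  "QQ D S = (\<Sum>r\<in>S. \<Sum>s\<in>S. D $ r $ s)"

lemma QQ_insert:
  fixes D :: "real^'n::finite^'n"
  assumes sym: "symmetric_mat D" and j: "j \<notin> S"
  shows "QQ D (insert j S) = QQ D S + (D $ j $ j + 2 * (\<Sum>s\<in>S. D $ j $ s))"
proof -
  have symm: "\<And>r s. D $ r $ s = D $ s $ r"
    using sym unfolding symmetric_mat_def by (metis transpose_def vec_lambda_beta)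
  have "QQ D (insert j S) = (\<Sum>s\<in>insert j S. D $ j $ s) + (\<Sum>r\<in>S. \<Sum>s\<in>insert j S. D $ r $ s)"
    unfolding QQ_def using j by simp
  also have "\<dots> = D $ j $ j + (\<Sum>s\<in>S. D $ j $ s) + (\<Sum>r\<in>S. D $ r $ j + (\<Sum>s\<in>S. D $ r $ s))"
    using j by simp
  also have "\<dots> = D $ j $ j + (\<Sum>s\<in>S. D $ j $ s) + (\<Sum>r\<in>S. D $ j $ r) + QQ D S"
    unfolding QQ_def sum.distrib by (simp add: symm)
  finally show ?thesis by simp
qed

lemma delta_mono:
  fixes D :: "real^'n::finite^'n"
  assumes c: "sdp_common D" and RS: "R \<subseteq> S" and j: "j \<notin> S"
  shows "(\<Sum>s\<in>S. D $ j $ s) \<le> (\<Sum>s\<in>R. D $ j $ s)"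
proof -
  have "(\<Sum>s\<in>S. D $ j $ s) = (\<Sum>s\<in>R. D $ j $ s) + (\<Sum>s\<in>S-R. D $ j $ s)"
    using RS by (metis add.commute finite sum.subset_diff)
  moreover have "(\<Sum>s\<in>S-R. D $ j $ s) \<le> 0"
    by (intro sum_nonpos) (metis DiffD1 c j sdp_common_def)
  ultimately show ?thesis by simp
qed

lemma delta_nonneg:
  fixes D :: "real^'n::finite^'n"
  assumes c: "sdp_common D" and j: "j \<notin> S"
  shows "0 \<le> D $ j $ j + 2 * (\<Sum>s\<in>S. D $ j $ s)"
proof -
  have "(\<Sum>s\<in>UNIV-{j}. D $ j $ s) \<le> (\<Sum>s\<in>S. D $ j $ s)"
    using delta_mono[OF c, of S "UNIV-{j}" j] j by auto
  moreover have "(\<Sum>s\<in>UNIV. D $ j $ s) = D $ j $ j + (\<Sum>s\<in>UNIV-{j}. D $ j $ s)"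
    by (simp add: sum.remove)
  moreover have "2 * (\<Sum>s\<in>UNIV. D $ j $ s) \<ge> D $ j $ j"
    using c unfolding sdp_common_def by auto
  ultimately show ?thesis by linarith
qed

lemma QQ_mono_union:
  fixes D :: "real^'n::finite^'n"
  assumes c: "sdp_common D"
  shows "QQ D R \<le> QQ D (R \<union> A)"
proof -
  have "finite A" by simp
  then show ?thesis
  proof (induction A rule: finite_induct)
    case empty then show ?case by simp
  next
    case (insert j A)
    show ?case
    proof (cases "j \<in> R \<union> A")
      case True
      then have "R \<union> insert j A = R \<union> A" by auto
      then show ?thesis using insert by simp
    next
      case False
      have "R \<union> insert j A = insert j (R \<union> A)" by auto
      then have "QQ D (R \<union> insert j A) = QQ D (R \<union> A) + (D $ j $ j + 2 * (\<Sum>s\<in>R \<union> A. D $ j $ s))"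
        using QQ_insert[OF _ False] c unfolding sdp_common_def by simp
      moreover have "0 \<le> D $ j $ j + 2 * (\<Sum>s\<in>R \<union> A. D $ j $ s)"
        using delta_nonneg[OF c False] .
      ultimately show ?thesis using insert by simp
    qed
  qed
qed

lemma sqrt_diff_anti:
  fixes a b d :: real
  assumes "0 \<le> a" "a \<le> b" "0 \<le> d"
  shows "sqrt (b + d) - sqrt b \<le> sqrt (a + d) - sqrt a"
proof -
  have "(a + d) * b \<ge> (b + d) * a" using assms by (simp add: algebra_simps mult_right_mono)
  then have "sqrt ((b + d) * a) \<le> sqrt ((a + d) * b)" by (rule real_sqrt_le_mono)
  then have h: "sqrt (b + d) * sqrt a \<le> sqrt (a + d) * sqrt b" by (simp add: real_sqrt_mult)
  have "(sqrt (b + d) + sqrt a)^2 \<le> (sqrt (a + d) + sqrt b)^2"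
    using assms h by (simp add: power2_sum)
  then have "sqrt (b + d) + sqrt a \<le> sqrt (a + d) + sqrt b"
    by (rule power2_le_imp_le) (use assms in simp_all)
  then show ?thesis by simp
qed

lemma submod_main:
  fixes D :: "real^'n::finite^'n" and \<mu> :: "real^'n"
  assumes c: "sdp_common D"
  shows "submodular (\<lambda>S. gfun \<mu> D (indvec S))"
  unfolding submodular_def
proof (intro allI impI, elim conjE)
  fix R S :: "'n set" and j :: 'n assume RS: "R \<subseteq> S" and j: "j \<notin> S"
  have jR: "j \<notin> R" using RS j by auto
  have sym: "symmetric_mat D" using c unfolding sdp_common_def by simp
  have g: "gfun \<mu> D (indvec X) = (\<Sum>i\<in>X. \<mu> $ i) + sqrt (QQ D X)" for X
    unfolding gfun_def inner_indvec quad_indvec QQ_def ..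
  define dR where "dR = D $ j $ j + 2 * (\<Sum>s\<in>R. D $ j $ s)"
  define dS where "dS = D $ j $ j + 2 * (\<Sum>s\<in>S. D $ j $ s)"
  have qR: "QQ D (R \<union> {j}) = QQ D R + dR" using QQ_insert[OF sym jR] dR_def by simp
  have qS: "QQ D (S \<union> {j}) = QQ D S + dS" using QQ_insert[OF sym j] dS_def by simp
  have d1: "dS \<le> dR" using delta_mono[OF c RS j] dR_def dS_def by simp
  have d0: "0 \<le> dS" using delta_nonneg[OF c j] dS_def by simp
  have a0: "0 \<le> QQ D R" using QQ_mono_union[OF c, of "{}" R] by (simp add: QQ_def)
  have ab: "QQ D R \<le> QQ D S" using QQ_mono_union[OF c, of R "S - R"] RS
    by (simp add: Un_absorb1)
  have lin: "(\<Sum>i\<in>X \<union> {j}. \<mu> $ i) = (\<Sum>i\<in>X. \<mu> $ i) + \<mu> $ j" if "j \<notin> X" for X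
    using that by simp
  have "sqrt (QQ D S + dS) - sqrt (QQ D S) \<le> sqrt (QQ D R + dS) - sqrt (QQ D R)"
    by (rule sqrt_diff_anti[OF a0 ab d0])
  also have "\<dots> \<le> sqrt (QQ D R + dR) - sqrt (QQ D R)"
    using d1 by simp
  finally show "gfun \<mu> D (indvec (S \<union> {j})) - gfun \<mu> D (indvec S)
      \<le> gfun \<mu> D (indvec (R \<union> {j})) - gfun \<mu> D (indvec R)"
    unfolding g qR qS lin[OF j] lin[OF jR] by simp
qed

lemma quad_le:
  assumes "loewner_le A B"
  shows "x \<bullet> (A *v x) \<le> x \<bullet> (B *v x)"
proof -
  have "0 \<le> x \<bullet> ((B - A) *v x)" using assms unfolding loewner_le_def psd_def by simp
  then show ?thesis by (simp add: matrix_vector_mult_diff_rdistrib inner_diff_right)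
qed

theorem proposition2:
  fixes \<mu> :: "real^'n" and T :: real and \<Lambda> DL DU :: "real^'n^'n"
  assumes "symmetric_mat \<Lambda>" and "pos_def \<Lambda>"
    and "optimal_for (feasible_L \<Lambda>) \<Lambda> DL"
    and "optimal_for (feasible_U \<Lambda>) \<Lambda> DU"
  shows "submodular (\<lambda>S. gfun \<mu> DL (indvec S))
       \<and> (\<forall>S. gfun \<mu> \<Lambda> (indvec S) \<le> T \<longrightarrow> gfun \<mu> DL (indvec S) \<le> T)
       \<and> submodular (\<lambda>S. gfun \<mu> DU (indvec S))
       \<and> (\<forall>S. gfun \<mu> DU (indvec S) \<le> T \<longrightarrow> gfun \<mu> \<Lambda> (indvec S) \<le> T)"
proof -
  have L: "sdp_common DL" "loewner_le DL \<Lambda>"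
    using assms(3) unfolding optimal_for_def feasible_L_def by auto
  have U: "sdp_common DU" "loewner_le \<Lambda> DU"
    using assms(4) unfolding optimal_for_def feasible_U_def by auto
  have gL: "gfun \<mu> DL y \<le> gfun \<mu> \<Lambda> y" for y
    unfolding gfun_def using quad_le[OF L(2), of y] by simp
  have gU: "gfun \<mu> \<Lambda> y \<le> gfun \<mu> DU y" for y
    unfolding gfun_def using quad_le[OF U(2), of y] by simp
  show ?thesis using submod_main[OF L(1)] submod_main[OF U(1)] gL gU
    by (meson order.trans)
qed

end
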